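(* Let $L>0$, let $n$ be an even positive integer, $\Delta x=2L/n$, and $x_j=-L+j\Delta x$ for $0\le j\le n-1$. Let $k\ge1$ and let $\omega_1,\dots,\omega_k$ be measures $\omega_i=\sum_{j=0}^{n-1}a^i_j\,\delta_{x_j}$ with $a^i_j\ge0$. Fix $C\in[0,1]$ and define for $\varepsilon>0$ $$\delta(\varepsilon)=C+\int_\varepsilon^\infty(1-e^{\varepsilon-s})\,(\omega_1*\cdots*\omega_k)(s)\,ds,$$ and let $\widetilde\delta(\varepsilon)$ be the output of the following algorithm: with $\boldsymbol a^i=(a^i_0,\dots,a^i_{n-1})^{\mathrm T}$, compute $\boldsymbol b=D\,\mathcal F^{-1}\big(\mathcal F(D\boldsymbol a^1)\odot\cdots\odot\mathcal F(D\boldsymbol a^k)\big)$ and set $$\widetilde\delta(\varepsilon)=C+\sum_{\ell\in\{0,\dots,n-1\}:\,x_\ell>\varepsilon}\big(1-e^{\varepsilon-x_\ell}\big)\,b_\ell .$$ Let $\alpha^+(\lambda)=\sum_{i=1}^k\log\sum_{j}a^i_je^{\lambda x_j}$ and $\alpha^-(\lambda)=\sum_{i=1}^k\log\sum_j a^i_je^{-\lambda x_j}$. Then for all $\varepsilon>0$ and all $\lambda>0$, $$\big|\delta(\varepsilon)-\widetilde\delta(\varepsilon)\big|\le\big(e^{\alpha^+(\lambda)}+e^{\alpha^-(\lambda)}\big)\frac{e^{-L\lambda}}{1-e^{-2L\lambda}}.$$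
   Context: $\delta_t$ denotes the Dirac point mass at $t$; convolution of discrete measures is $\big(\sum_i a_i\delta_{t_i}\big)*\big(\sum_j b_j\delta_{u_j}\big)=\sum_{i,j}a_ib_j\delta_{t_i+u_j}$, and $\int_\varepsilon^\infty h(s)\mu(s)ds$ for a discrete measure means the sum of $h$ times the masses of the atoms in $[\varepsilon,\infty)$. $D=\begin{bmatrix}0&I_{n/2}\\ I_{n/2}&0\end{bmatrix}$; $(\mathcal F x)_k=\sum_{j=0}^{n-1}x_je^{-\mathrm i2\pi kj/n}$, $(\mathcal F^{-1}w)_k=\frac1n\sum_{j=0}^{n-1}w_je^{\mathrm i2\pi kj/n}$; $\odot$ is the entrywise product. In the paper, $\omega_i$ are privacy loss distributions of the composed mechanisms, $C=1-\prod_\ell(1-\delta_\ell(\infty))$ accounts for infinite privacy loss, and $\delta(\varepsilon)$ is the tight DP bound. *)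

theory Defs
  imports "HOL-Analysis.Analysis"
begin

definition grid :: "real \<Rightarrow> nat \<Rightarrow> nat \<Rightarrow> real" where
  "grid L n j = - L + real j * (2 * L / real n)"

text \<open>Swap matrix D = [[0, I],[I, 0]] acting on vectors of length n (indices < n).\<close>
definition swapD :: "nat \<Rightarrow> (nat \<Rightarrow> complex) \<Rightarrow> nat \<Rightarrow> complex" where
  "swapD n x j = x ((j + n div 2) mod n)"

definition dft :: "nat \<Rightarrow> (nat \<Rightarrow> complex) \<Rightarrow> nat \<Rightarrow> complex" where
  "dft n x m = (\<Sum>j<n. x j * exp (- \<i> * 2 * complex_of_real pi * of_nat m * of_nat j / of_nat n))"

definition idft :: "nat \<Rightarrow> (nat \<Rightarrow> complex) \<Rightarrow> nat \<Rightarrow> complex" where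
  "idft n w m = (1 / of_nat n) * (\<Sum>j<n. w j * exp (\<i> * 2 * complex_of_real pi * of_nat m * of_nat j / of_nat n))"

text \<open>Exact tight bound: C + integral over [eps,\<infinity>) of (1 - e^(eps-s)) against the
  k-fold convolution of omega_i = \<Sum>_j a i j \<delta>_{x_j}; the convolution has an atom at
  x_{j_1}+...+x_{j_k} of mass a 1 j_1 * ... * a k j_k for every tuple (j_1,...,j_k).\<close>
definition delta_exact :: "real \<Rightarrow> nat \<Rightarrow> nat \<Rightarrow> (nat \<Rightarrow> nat \<Rightarrow> real) \<Rightarrow> real \<Rightarrow> real \<Rightarrow> real" where
  "delta_exact L n k a C eps = C +
     (\<Sum>js\<in>({1..k} \<rightarrow>\<^sub>E {..<n}).
        (let s = (\<Sum>i\<in>{1..k}. grid L n (js i))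
         in if eps \<le> s then (1 - exp (eps - s)) * (\<Prod>i\<in>{1..k}. a i (js i)) else 0))"

definition fft_b :: "nat \<Rightarrow> nat \<Rightarrow> (nat \<Rightarrow> nat \<Rightarrow> real) \<Rightarrow> nat \<Rightarrow> complex" where
  "fft_b n k a = swapD n (idft n (\<lambda>m. \<Prod>i\<in>{1..k}. dft n (swapD n (\<lambda>j. complex_of_real (a i j))) m))"

definition delta_fft :: "real \<Rightarrow> nat \<Rightarrow> nat \<Rightarrow> (nat \<Rightarrow> nat \<Rightarrow> real) \<Rightarrow> real \<Rightarrow> real \<Rightarrow> complex" where
  "delta_fft L n k a C eps = complex_of_real C +
     (\<Sum>l\<in>{l. l < n \<and> grid L n l > eps}. complex_of_real (1 - exp (eps - grid L n l)) * fft_b n k a l)"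

definition alpha_plus :: "real \<Rightarrow> nat \<Rightarrow> nat \<Rightarrow> (nat \<Rightarrow> nat \<Rightarrow> real) \<Rightarrow> real \<Rightarrow> real" where
  "alpha_plus L n k a lam = (\<Sum>i\<in>{1..k}. ln (\<Sum>j<n. a i j * exp (lam * grid L n j)))"

definition alpha_minus :: "real \<Rightarrow> nat \<Rightarrow> nat \<Rightarrow> (nat \<Rightarrow> nat \<Rightarrow> real) \<Rightarrow> real \<Rightarrow> real" where
  "alpha_minus L n k a lam = (\<Sum>i\<in>{1..k}. ln (\<Sum>j<n. a i j * exp (- lam * grid L n j)))"

end

theory Submission
  imports Defs
begin


definition E :: "nat \<Rightarrow> int \<Rightarrow> complex" where
  "E n t = exp (2 * of_real pi * \<i> * of_int t / of_nat n)"

lemma E_add: "E n (a + b) = E n a * E n b"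
  unfolding E_def by (simp add: exp_add[symmetric] add_divide_distrib distrib_left distrib_right)

lemma E_0[simp]: "E n 0 = 1" unfolding E_def by simp

lemma E_mult_n: assumes "n > 0" shows "E n (int n * c) = 1"
proof -
  have "E n (int n * c) = exp ((2 * of_int c * of_real pi) * \<i>)"
    unfolding E_def using assms by (simp add: field_simps)
  also have "\<dots> = 1" by (subst exp_eq_1) (auto intro!: exI[of _ c])
  finally show ?thesis .
qed

lemma E_period: assumes "n > 0" shows "E n (t + int n * c) = E n t"
  using E_add[of n t "int n * c"] E_mult_n[OF assms] by simp

lemma E_mod: assumes "n > 0" shows "E n (t mod int n) = E n t"
proof -
  have "t = t mod int n + int n * (t div int n)" by simp
  then show ?thesis using E_period[OF assms, of "t mod int n" "t div int n"] by metis
qed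

lemma E_power: "E n (int m * t) = (E n t) ^ m"
  by (induction m) (simp_all add: distrib_right E_add)

lemma E_eq_1_iff: assumes "n > 0" shows "E n t = 1 \<longleftrightarrow> int n dvd t"
proof
  assume "int n dvd t" then obtain c where "t = int n * c" by blast
  then show "E n t = 1" using E_mult_n[OF assms] by simp
next
  assume h: "E n t = 1"
  then obtain z::int where z: "Im (2 * of_real pi * \<i> * of_int t / of_nat n) = of_int (2*z) * pi"
    unfolding E_def exp_eq_1 by blast
  have "2 * pi * t / n = 2 * z * pi" using z by simp
  then have "real_of_int t = real_of_int z * real n" using assms by (simp add: field_simps)
  then have "real_of_int t = real_of_int (z * int n)" by simp
  then have "t = z * int n" by (metis of_int_eq_iff of_int_mult of_int_of_nat_eq)
  then show "int n dvd t" by simp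
qed

lemma orth: assumes "n > 0"
  shows "(\<Sum>m<n. E n (int m * t)) = (if int n dvd t then of_nat n else 0)"
proof -
  have "(\<Sum>m<n. E n (int m * t)) = (\<Sum>m<n. (E n t) ^ m)" by (simp add: E_power)
  also have "\<dots> = (if int n dvd t then of_nat n else 0)"
  proof (cases "int n dvd t")
    case True then have "E n t = 1" using E_eq_1_iff[OF assms] by simp
    then show ?thesis using True by simp
  next
    case False
    have "(E n t) ^ n = 1" using E_power[of n n t] E_mult_n[OF assms, of t] by simp
    then show ?thesis using False E_eq_1_iff[OF assms] by (simp add: sum_gp_strict)
  qed
  finally show ?thesis .
qed



lemma E_cong: assumes "n > 0" "a mod int n = b mod int n" shows "E n a = E n b"
  by (metis E_mod assms)

lemma E_sum: "(\<Prod>i\<in>A. E n (f i)) = E n (\<Sum>i\<in>A. f i)"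
  by (induction A rule: infinite_finite_induct) (simp_all add: E_add)

lemma dft_E: "dft n y m = (\<Sum>j<n. y j * E n (- (int m * int j)))"
  unfolding dft_def E_def by (intro sum.cong refl arg_cong2[where f="(*)"] arg_cong[where f=exp]) (simp add: field_simps)

lemma idft_E: "idft n w m = (1 / of_nat n) * (\<Sum>j<n. w j * E n (int m * int j))"
  unfolding idft_def E_def by (intro sum.cong refl arg_cong2[where f="(*)"] arg_cong[where f=exp]) (simp add: field_simps)

lemma dft_swap:
  assumes "n > 0" "even n"
  shows "dft n (swapD n x) m = E n (- (int m * int (n div 2))) * (\<Sum>j<n. x j * E n (- (int m * int j)))"
proof -
  define h where "h = n div 2"
  have hh: "h + h = n" using assms unfolding h_def by auto
  define g where "g j = (j + h) mod n" for j
  have gg: "g (g j) = j" if "j < n" for j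
  proof -
    have "g (g j) = (j + (h + h)) mod n" unfolding g_def by (simp add: mod_add_left_eq add.assoc)
    also have "\<dots> = j" using hh that by simp
    finally show ?thesis .
  qed
  have gm: "g j < n" for j unfolding g_def using assms by simp
  have bij: "bij_betw g {..<n} {..<n}"
    by (rule bij_betw_byWitness[where f'=g]) (auto simp: gg gm)
  have "dft n (swapD n x) m = (\<Sum>j<n. x (g j) * E n (- (int m * int j)))"
    unfolding dft_E swapD_def g_def h_def ..
  also have "\<dots> = (\<Sum>j<n. x (g j) * E n (- (int m * int (g (g j)))))"
    by (intro sum.cong refl) (simp add: gg)
  also have "\<dots> = (\<Sum>j<n. x j * E n (- (int m * int (g j))))"
    using sum.reindex_bij_betw[OF bij, of "\<lambda>j. x j * E n (- (int m * int (g j)))"] by simp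
  also have "\<dots> = (\<Sum>j<n. x j * (E n (- (int m * int h)) * E n (- (int m * int j))))"
  proof (intro sum.cong refl arg_cong2[where f="(*)"])
    fix j
    have "E n (- (int m * int (g j))) = E n (- (int m * (int j + int h)))"
    proof (rule E_cong[OF assms(1)])
      have "int (g j) = (int j + int h) mod int n" unfolding g_def by (simp add: zmod_int)
      then show "- (int m * int (g j)) mod int n = - (int m * (int j + int h)) mod int n"
        by (metis mod_minus_eq mod_mult_right_eq)
    qed
    then show "E n (- (int m * int (g j))) = E n (- (int m * int h)) * E n (- (int m * int j))"
      by (simp add: E_add[symmetric] algebra_simps)
  qed
  also have "\<dots> = E n (- (int m * int h)) * (\<Sum>j<n. x j * E n (- (int m * int j)))"
    by (simp add: sum_distrib_left algebra_simps)
  finally show ?thesis unfolding h_def .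
qed

definition PP :: "nat \<Rightarrow> (nat \<Rightarrow> nat \<Rightarrow> real) \<Rightarrow> (nat \<Rightarrow> nat) \<Rightarrow> real" where
  "PP k a js = (\<Prod>i\<in>{1..k}. a i (js i))"

definition SS :: "nat \<Rightarrow> (nat \<Rightarrow> nat) \<Rightarrow> int" where
  "SS k js = (\<Sum>i\<in>{1..k}. int (js i))"

lemma prod_dft:
  assumes "n > 0" "even n"
  shows "(\<Prod>i\<in>{1..k}. dft n (swapD n (\<lambda>j. complex_of_real (a i j))) m)
    = (\<Sum>js\<in>{1..k} \<rightarrow>\<^sub>E {..<n}. of_real (PP k a js) * E n (int m * (- int k * int (n div 2) - SS k js)))"
proof -
  have "(\<Prod>i\<in>{1..k}. dft n (swapD n (\<lambda>j. complex_of_real (a i j))) m)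
     = (\<Prod>i\<in>{1..k}. E n (- (int m * int (n div 2))) * (\<Sum>j<n. of_real (a i j) * E n (- (int m * int j))))"
    using dft_swap[OF assms] by simp
  also have "\<dots> = E n (- (int m * int (n div 2))) ^ k * (\<Prod>i\<in>{1..k}. (\<Sum>j<n. of_real (a i j) * E n (- (int m * int j))))"
    by (simp add: prod.distrib)
  also have "(\<Prod>i\<in>{1..k}. (\<Sum>j<n. of_real (a i j) * E n (- (int m * int j))))
     = (\<Sum>js\<in>{1..k} \<rightarrow>\<^sub>E {..<n}. \<Prod>i\<in>{1..k}. of_real (a i (js i)) * E n (- (int m * int (js i))))"
    by (rule prod_sum_PiE) auto
  also have "\<dots> = (\<Sum>js\<in>{1..k} \<rightarrow>\<^sub>E {..<n}. of_real (PP k a js) * E n (- (int m * SS k js)))"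
    by (simp add: prod.distrib PP_def SS_def E_sum sum_negf sum_distrib_left)
  finally show ?thesis
    apply (simp add: sum_distrib_left E_power[symmetric] E_add[symmetric] algebra_simps)
    apply (intro sum.cong refl arg_cong2[where f="(*)"] arg_cong[where f="E n"])
    by (simp add: algebra_simps)
qed



lemma fft_b_formula:
  assumes "n > 0" "even n"
  shows "fft_b n k a l = (\<Sum>js\<in>{1..k} \<rightarrow>\<^sub>E {..<n}.
     if int n dvd (int ((l + n div 2) mod n) - int k * int (n div 2) - SS k js)
     then of_real (PP k a js) else 0)"
proof -
  define q where "q = (l + n div 2) mod n"
  define J where "J = {1..k} \<rightarrow>\<^sub>E {..<n}"
  define T where "T js = int q - int k * int (n div 2) - SS k js" for js
  have "fft_b n k a l = (1 / of_nat n) * (\<Sum>j<n. (\<Sum>js\<in>J. of_real (PP k a js) * E n (int j * (- int k * int (n div 2) - SS k js))) * E n (int q * int j))"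
    unfolding fft_b_def swapD_def idft_E prod_dft[OF assms] q_def J_def ..
  also have "\<dots> = (1 / of_nat n) * (\<Sum>j<n. \<Sum>js\<in>J. of_real (PP k a js) * E n (int j * T js))"
  proof -
    have "E n (int j * (- int k * int (n div 2) - SS k js)) * E n (int q * int j) = E n (int j * T js)" for j js
      unfolding T_def E_add[symmetric] by (simp add: algebra_simps)
    then show ?thesis unfolding sum_distrib_right by (simp add: mult.assoc)
  qed
  also have "\<dots> = (\<Sum>js\<in>J. of_real (PP k a js) * ((1 / of_nat n) * (\<Sum>j<n. E n (int j * T js))))"
    by (subst sum.swap) (simp add: sum_distrib_left algebra_simps)
  also have "\<dots> = (\<Sum>js\<in>J. if int n dvd T js then of_real (PP k a js) else 0)"
    using assms(1) by (intro sum.cong refl) (simp add: orth)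
  finally show ?thesis unfolding T_def q_def J_def .
qed



definition l0 :: "nat \<Rightarrow> nat \<Rightarrow> (nat \<Rightarrow> nat) \<Rightarrow> nat" where
  "l0 n k js = nat ((SS k js + int k * int (n div 2) - int (n div 2)) mod int n)"

definition gf :: "real \<Rightarrow> real \<Rightarrow> real" where
  "gf eps t = (if eps \<le> t then 1 - exp (eps - t) else 0)"

lemma l0_lt: "n > 0 \<Longrightarrow> l0 n k js < n"
  unfolding l0_def by (simp add: nat_less_iff)

lemma cond_iff:
  assumes "n > 0" "l < n"
  shows "int n dvd (int ((l + n div 2) mod n) - int k * int (n div 2) - SS k js) \<longleftrightarrow> l = l0 n k js"
proof -
  define h where "h = n div 2"
  define R where "R = SS k js + int k * int h - int h"
  have e: "int ((l + h) mod n) - int k * int h - SS k js = (int l + int h) mod int n - (int k * int h + SS k js)"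
    by (simp add: zmod_int)
  have e2: "int l - R = (int l + int h) - (int k * int h + SS k js)" by (simp add: R_def)
  have "int n dvd (int ((l + h) mod n) - int k * int h - SS k js) \<longleftrightarrow> int n dvd (int l - R)"
    unfolding e e2 dvd_eq_mod_eq_0 mod_diff_left_eq ..
  also have "\<dots> \<longleftrightarrow> int l mod int n = R mod int n" by (simp add: mod_eq_dvd_iff)
  also have "\<dots> \<longleftrightarrow> int l = R mod int n" using assms by simp
  also have "\<dots> \<longleftrightarrow> l = nat (R mod int n)"
  proof -
    have "R mod int n \<ge> 0" using assms(1) by simp
    then show "int l = R mod int n \<longleftrightarrow> l = nat (R mod int n)" by auto
  qed
  also have "nat (R mod int n) = l0 n k js" unfolding l0_def R_def h_def ..
  finally show ?thesis unfolding h_def .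
qed

lemma delta_fft_formula:
  assumes "n > 0" "even n"
  shows "delta_fft L n k a C eps = of_real (C + (\<Sum>js\<in>{1..k} \<rightarrow>\<^sub>E {..<n}. PP k a js * gf eps (grid L n (l0 n k js))))"
proof -
  define J where "J = {1..k} \<rightarrow>\<^sub>E {..<n}"
  define S where "S = {l. l < n \<and> grid L n l > eps}"
  have fin: "finite S" unfolding S_def by simp
  have "delta_fft L n k a C eps = of_real C + (\<Sum>l\<in>S. of_real (1 - exp (eps - grid L n l)) *
      (\<Sum>js\<in>J. if l = l0 n k js then of_real (PP k a js) else 0))"
    unfolding delta_fft_def fft_b_formula[OF assms] S_def J_def
    by (intro arg_cong2[where f="(+)"] refl sum.cong arg_cong2[where f="(*)"]) (simp_all add: cond_iff assms)
  also have "(\<Sum>l\<in>S. of_real (1 - exp (eps - grid L n l)) *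
      (\<Sum>js\<in>J. if l = l0 n k js then of_real (PP k a js) else 0))
    = (\<Sum>js\<in>J. \<Sum>l\<in>S. if l = l0 n k js then of_real ((1 - exp (eps - grid L n l)) * PP k a js) else (0::complex))"
    by (subst sum.swap) (simp add: sum_distrib_left if_distrib cong: if_cong)
  also have "\<dots> = (\<Sum>js\<in>J. of_real (PP k a js * gf eps (grid L n (l0 n k js))))"
  proof (intro sum.cong refl)
    fix js
    have "(\<Sum>l\<in>S. if l = l0 n k js then of_real ((1 - exp (eps - grid L n l)) * PP k a js) else (0::complex))
       = (if l0 n k js \<in> S then of_real ((1 - exp (eps - grid L n (l0 n k js))) * PP k a js) else 0)"
      using fin by (simp add: sum.delta')
    also have "\<dots> = of_real (PP k a js * gf eps (grid L n (l0 n k js)))"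
      unfolding S_def gf_def using l0_lt[OF assms(1)] by auto
    finally show "(\<Sum>l\<in>S. if l = l0 n k js then of_real ((1 - exp (eps - grid L n l)) * PP k a js) else (0::complex))
       = of_real (PP k a js * gf eps (grid L n (l0 n k js)))" .
  qed
  finally show ?thesis unfolding J_def by simp
qed



definition sg :: "real \<Rightarrow> nat \<Rightarrow> nat \<Rightarrow> (nat \<Rightarrow> nat) \<Rightarrow> real" where
  "sg L n k js = (\<Sum>i\<in>{1..k}. grid L n (js i))"

lemma delta_exact_formula:
  "delta_exact L n k a C eps = C + (\<Sum>js\<in>{1..k} \<rightarrow>\<^sub>E {..<n}. PP k a js * gf eps (sg L n k js))"
  unfolding delta_exact_def Let_def gf_def PP_def sg_def
  by (intro arg_cong2[where f="(+)"] refl sum.cong) auto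

lemma grid_l0:
  assumes "n > 0" "even n"
  shows "\<exists>z::int. grid L n (l0 n k js) - sg L n k js = 2 * L * real_of_int z"
proof -
  define h where "h = n div 2"
  define R where "R = SS k js + int k * int h - int h"
  have nh: "real n = 2 * real h" unfolding h_def using assms by auto
  have hL: "real h * (2 * L / real n) = L" using nh assms by (simp add: field_simps)
  have l0e: "real (l0 n k js) = real_of_int R - real n * real_of_int (R div int n)"
  proof -
    have "R mod int n \<ge> 0" using assms by simp
    then have "real (l0 n k js) = real_of_int (R mod int n)" unfolding l0_def R_def h_def by simp
    also have "R mod int n = R - int n * (R div int n)" by (simp add: minus_div_mult_eq_mod[symmetric] algebra_simps)
    finally show ?thesis by simp
  qed
  have se: "sg L n k js = - real k * L + (2 * L / real n) * real_of_int (SS k js)"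
  proof -
    have "sg L n k js = (\<Sum>i\<in>{1..k}. real (js i) * (2 * L / real n) - L)"
      unfolding sg_def grid_def by (simp add: algebra_simps)
    also have "\<dots> = (\<Sum>i\<in>{1..k}. real (js i)) * (2 * L / real n) - real k * L"
      by (simp add: sum_subtractf sum_distrib_right sum_divide_distrib)
    finally show ?thesis unfolding SS_def by simp
  qed
  have "grid L n (l0 n k js) - sg L n k js = 2 * L * real_of_int (int k - 1 - R div int n)"
  proof -
    have hp: "real h > 0" using nh assms by simp
    show ?thesis unfolding grid_def l0e se R_def nh using hp by (simp add: field_simps)
  qed
  then show ?thesis by blast
qed

lemma term_bound:
  assumes "n > 0" "even n" "L > 0" "js \<in> {1..k} \<rightarrow>\<^sub>E {..<n}"
  shows "\<bar>gf eps (sg L n k js) - gf eps (grid L n (l0 n k js))\<bar> \<le> (if - L \<le> sg L n k js \<and> sg L n k js < L then 0 else 1)"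
proof -
  define s where "s = sg L n k js"
  define r where "r = grid L n (l0 n k js)"
  have gf01: "0 \<le> gf eps t \<and> gf eps t \<le> 1" for t unfolding gf_def by auto
  have rlo: "- L \<le> r" unfolding r_def grid_def using assms by simp
  have rhi: "r < L"
  proof -
    have "real (l0 n k js) < real n" using l0_lt[OF assms(1)] by simp
    then have "real (l0 n k js) * (2 * L / real n) < real n * (2 * L / real n)"
      using assms by (intro mult_strict_right_mono) auto
    then show ?thesis unfolding r_def grid_def using assms by simp
  qed
  obtain z where z: "r - s = 2 * L * real_of_int z" using grid_l0[OF assms(1,2)] unfolding r_def s_def by blast
  show ?thesis
  proof (cases "- L \<le> s \<and> s < L")
    case True
    then have "\<bar>2 * L * real_of_int z\<bar> < 2 * L" using rlo rhi z by linarith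
    then have "\<bar>real_of_int z\<bar> < 1" using assms by (simp add: abs_mult)
    then have "z = 0" by linarith
    then show ?thesis using z True unfolding s_def r_def by simp
  next
    case False
    then show ?thesis using gf01[of s] gf01[of r] unfolding s_def r_def by auto
  qed
qed

lemma ind_bound:
  fixes lam L s :: real
  assumes "lam > 0"
  shows "(if - L \<le> s \<and> s < L then 0 else 1) \<le> exp (- L * lam) * (exp (lam * s) + exp (- lam * s))"
proof -
  have e: "exp (- L * lam) * (exp (lam * s) + exp (- lam * s)) = exp (lam * (s - L)) + exp (- lam * (s + L))"
  proof -
    have "lam * (s - L) = - L * lam + lam * s" by algebra
    then have e1: "exp (- L * lam) * exp (lam * s) = exp (lam * (s - L))"
      by (simp only: exp_add)
    have "- lam * (s + L) = - L * lam + - lam * s" by algebra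
    then have e2: "exp (- L * lam) * exp (- lam * s) = exp (- lam * (s + L))"
      by (simp only: exp_add)
    show ?thesis unfolding distrib_left e1 e2 ..
  qed
  show ?thesis
  proof (cases "- L \<le> s \<and> s < L")
    case True then show ?thesis by (simp add: e add_nonneg_nonneg)
  next
    case False
    then have "s \<ge> L \<or> s < - L" by auto
    then have "1 \<le> exp (lam * (s - L)) + exp (- lam * (s + L))"
    proof
      assume "s \<ge> L" then have "lam * (s - L) \<ge> 0" using assms by simp
      then have "1 \<le> exp (lam * (s - L))" by simp
      then show ?thesis by (smt (verit) exp_gt_zero)
    next
      assume "s < - L" then have "- lam * (s + L) \<ge> 0" using assms by (simp add: mult_pos_neg less_imp_le)
      then have "1 \<le> exp (- lam * (s + L))" by simp
      then show ?thesis by (smt (verit) exp_gt_zero)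
    qed
    then show ?thesis using False e by simp
  qed
qed

lemma mgf:
  "(\<Sum>js\<in>{1..k} \<rightarrow>\<^sub>E {..<n}. PP k a js * exp (mu * sg L n k js)) = (\<Prod>i\<in>{1..k}. \<Sum>j<n. a i j * exp (mu * grid L n j))"
proof -
  have "(\<Prod>i\<in>{1..k}. \<Sum>j<n. a i j * exp (mu * grid L n j)) = (\<Sum>js\<in>{1..k} \<rightarrow>\<^sub>E {..<n}. \<Prod>i\<in>{1..k}. a i (js i) * exp (mu * grid L n (js i)))"
    by (rule prod_sum_PiE) auto
  also have "\<dots> = (\<Sum>js\<in>{1..k} \<rightarrow>\<^sub>E {..<n}. PP k a js * exp (mu * sg L n k js))"
    by (simp add: prod.distrib PP_def sg_def sum_distrib_left exp_sum)
  finally show ?thesis by simp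
qed

lemma prod_le_exp_ln:
  fixes X :: "nat \<Rightarrow> real"
  assumes "finite A" "\<And>i. i \<in> A \<Longrightarrow> X i \<ge> 0"
  shows "(\<Prod>i\<in>A. X i) \<le> exp (\<Sum>i\<in>A. ln (X i))"
proof (cases "\<forall>i\<in>A. X i > 0")
  case True
  have "exp (\<Sum>i\<in>A. ln (X i)) = (\<Prod>i\<in>A. exp (ln (X i)))" using assms(1) by (simp add: exp_sum)
  also have "\<dots> = (\<Prod>i\<in>A. X i)" by (rule prod.cong) (use True in auto)
  finally show ?thesis by simp
next
  case False
  then obtain i where "i \<in> A" "X i = 0" using assms by force
  then have "(\<Prod>i\<in>A. X i) = 0" using assms by (auto simp: prod_zero_iff)
  then show ?thesis by simp
qed



theorem theorem7:
  fixes L C eps lam :: real and n k :: nat and a :: "nat \<Rightarrow> nat \<Rightarrow> real"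
  assumes "L > 0" and "n > 0" and "even n" and "k \<ge> 1"
    and "\<And>i j. i \<in> {1..k} \<Longrightarrow> j < n \<Longrightarrow> a i j \<ge> 0"
    and "0 \<le> C" and "C \<le> 1"
    and "eps > 0" and "lam > 0"
  shows "cmod (complex_of_real (delta_exact L n k a C eps) - delta_fft L n k a C eps)
         \<le> (exp (alpha_plus L n k a lam) + exp (alpha_minus L n k a lam))
           * (exp (- L * lam) / (1 - exp (- 2 * L * lam)))"
proof -
  define J where "J = {1..k} \<rightarrow>\<^sub>E {..<n}"
  have finJ: "finite J" unfolding J_def by (simp add: finite_PiE)
  have PPnn: "PP k a js \<ge> 0" if "js \<in> J" for js
    unfolding PP_def using that assms(5) unfolding J_def by (auto intro!: prod_nonneg simp: PiE_def Pi_def)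
  define D where "D js = gf eps (sg L n k js) - gf eps (grid L n (l0 n k js))" for js
  have "complex_of_real (delta_exact L n k a C eps) - delta_fft L n k a C eps
      = complex_of_real (\<Sum>js\<in>J. PP k a js * D js)"
    unfolding delta_exact_formula delta_fft_formula[OF assms(2,3)] D_def J_def
    by (simp add: sum_subtractf right_diff_distrib)
  then have "cmod (complex_of_real (delta_exact L n k a C eps) - delta_fft L n k a C eps)
      = \<bar>\<Sum>js\<in>J. PP k a js * D js\<bar>" by (simp only: norm_of_real)
  also have "\<dots> \<le> (\<Sum>js\<in>J. \<bar>PP k a js * D js\<bar>)" by (rule sum_abs)
  also have "\<dots> \<le> (\<Sum>js\<in>J. PP k a js * (exp (- L * lam) * (exp (lam * sg L n k js) + exp (- lam * sg L n k js))))"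
  proof (rule sum_mono)
    fix js assume js: "js \<in> J"
    have "\<bar>D js\<bar> \<le> exp (- L * lam) * (exp (lam * sg L n k js) + exp (- lam * sg L n k js))"
      using term_bound[OF assms(2,3,1), of js k eps] ind_bound[OF assms(9), of L "sg L n k js"] js
      unfolding D_def J_def by linarith
    then show "\<bar>PP k a js * D js\<bar> \<le> PP k a js * (exp (- L * lam) * (exp (lam * sg L n k js) + exp (- lam * sg L n k js)))"
      using PPnn[OF js] by (simp add: abs_mult mult_left_mono)
  qed
  also have "\<dots> = exp (- L * lam) * ((\<Sum>js\<in>J. PP k a js * exp (lam * sg L n k js)) + (\<Sum>js\<in>J. PP k a js * exp (- lam * sg L n k js)))"
    by (simp add: sum_distrib_left sum.distrib algebra_simps)
  also have "\<dots> = exp (- L * lam) * ((\<Prod>i\<in>{1..k}. \<Sum>j<n. a i j * exp (lam * grid L n j)) + (\<Prod>i\<in>{1..k}. \<Sum>j<n. a i j * exp (- lam * grid L n j)))"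
    unfolding J_def mgf ..
  also have "\<dots> \<le> exp (- L * lam) * (exp (alpha_plus L n k a lam) + exp (alpha_minus L n k a lam))"
    unfolding alpha_plus_def alpha_minus_def
    by (intro mult_left_mono add_mono prod_le_exp_ln) (auto intro!: sum_nonneg mult_nonneg_nonneg assms(5))
  also have "\<dots> \<le> (exp (alpha_plus L n k a lam) + exp (alpha_minus L n k a lam)) * (exp (- L * lam) / (1 - exp (- 2 * L * lam)))"
  proof -
    have "exp (- 2 * L * lam) < 1" using assms(1,9) by simp
    moreover have "exp (- 2 * L * lam) > 0" by simp
    ultimately have "exp (- L * lam) \<le> exp (- L * lam) / (1 - exp (- 2 * L * lam))"
      by (simp add: le_divide_eq)
    moreover have "exp (alpha_plus L n k a lam) + exp (alpha_minus L n k a lam) \<ge> 0"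
      by (simp add: add_nonneg_nonneg)
    ultimately show ?thesis by (metis mult.commute mult_right_mono)
  qed
  finally show ?thesis .
qed

end
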